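(* Let $n \geq 1$ be an integer and consider Nim on the hypercube $Q_n$ in which every edge has weight $1$, with the playing piece $\Delta$ starting at a vertex. Then the second player $P_2$ has a winning strategy if and only if $n$ is even.
   Context: Nim on a graph: two players agree on a finite simple undirected graph $G$ whose edges carry positive integer weights, and a starting vertex on which a playing piece $\Delta$ is placed. Players $P_1$ (who moves first) and $P_2$ alternate. On a turn, the player chooses an edge of positive weight incident with the vertex currently holding $\Delta$, lowers that edge's weight by a positive integer amount, and moves $\Delta$ to the other endpoint of that edge. Edges of weight $0$ are no longer playable. A player who cannot move loses. The hypercube $Q_n$ has as vertices the binary $n$-tuples, two being adjacent iff they differ in exactly one coordinate. *)

theory Defs
  imports Main
begin

text \<open>A graph is given by its edge set E (edges are 2-element
sets of vertices); a weight function w assigns a natural number to each edge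
(edges of weight 0 are unplayable). A position is a pair (w, v) where v is the
vertex holding the playing piece.\<close>

definition nim_move :: "'a set set \<Rightarrow> ('a set \<Rightarrow> nat) \<times> 'a \<Rightarrow> ('a set \<Rightarrow> nat) \<times> 'a \<Rightarrow> bool" where
  "nim_move E p q \<longleftrightarrow>
     (\<exists>u k. {snd p, u} \<in> E \<and> u \<noteq> snd p \<and> 0 < k \<and> k \<le> fst p {snd p, u}
        \<and> q = ((fst p)({snd p, u} := fst p {snd p, u} - k), u))"

text \<open>Winning / losing positions for the player about to move (normal play:
a player who cannot move loses).\<close>

inductive nim_win :: "'a set set \<Rightarrow> ('a set \<Rightarrow> nat) \<times> 'a \<Rightarrow> bool"
  and nim_lose :: "'a set set \<Rightarrow> ('a set \<Rightarrow> nat) \<times> 'a \<Rightarrow> bool"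
  for E :: "'a set set" where
  win: "nim_move E p q \<Longrightarrow> nim_lose E q \<Longrightarrow> nim_win E p"
| lose: "(\<forall>q. nim_move E p q \<longrightarrow> nim_win E q) \<Longrightarrow> nim_lose E p"

definition nim_P2_wins :: "'a set set \<Rightarrow> ('a set \<Rightarrow> nat) \<Rightarrow> 'a \<Rightarrow> bool" where
  "nim_P2_wins E w v \<longleftrightarrow> nim_lose E (w, v)"

definition hypercube_vertices :: "nat \<Rightarrow> bool list set" where
  "hypercube_vertices n = {x. length x = n}"

definition hypercube_edges :: "nat \<Rightarrow> bool list set set" where
  "hypercube_edges n = {{x, y} | x y. x \<in> hypercube_vertices n \<and> y \<in> hypercube_vertices n
      \<and> card {i. i < n \<and> x ! i \<noteq> y ! i} = 1}"

definition unit_weights :: "'a set set \<Rightarrow> 'a set \<Rightarrow> nat" where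
  "unit_weights E e = (if e \<in> E then 1 else 0)"

end

theory Submission
  imports Defs
begin

lemma excl: "nim_win E p \<Longrightarrow> \<not> nim_lose E p" "nim_lose E p \<Longrightarrow> \<not> nim_win E p"
proof (induction rule: nim_win_nim_lose.inducts)
  case (win p q)
  then show ?case by (metis nim_lose.cases)
next
  case (lose p)
  then show ?case by (metis nim_win.cases)
qed

lemma move_decr:
  assumes "finite E" "nim_move E p q"
  shows "sum (fst q) E < sum (fst p) E"
proof -
  obtain u k where e: "{snd p, u} \<in> E" and k: "0 < k" "k \<le> fst p {snd p, u}"
    and q: "q = ((fst p)({snd p, u} := fst p {snd p, u} - k), u)"
    using assms(2) unfolding nim_move_def by blast
  let ?e = "{snd p, u}"
  have "sum (fst q) E = fst q ?e + sum (fst q) (E - {?e})"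
    using assms(1) e by (simp add: sum.remove)
  also have "sum (fst q) (E - {?e}) = sum (fst p) (E - {?e})"
    using q by (intro sum.cong) auto
  also have "fst q ?e < fst p ?e" using q k by simp
  hence "fst q ?e + sum (fst p) (E - {?e}) < fst p ?e + sum (fst p) (E - {?e})" by simp
  also have "\<dots> = sum (fst p) E" using assms(1) e by (simp add: sum.remove)
  finally show ?thesis .
qed

lemma strat_lose:
  assumes fin: "finite E"
    and step: "\<And>p q. I p \<Longrightarrow> nim_move E p q \<Longrightarrow> \<exists>r. nim_move E q r \<and> I r"
  shows "I p \<Longrightarrow> nim_lose E p"
proof (induction "sum (fst p) E" arbitrary: p rule: less_induct)
  case less
  show ?case
  proof (rule nim_win_nim_lose.lose, intro allI impI)
    fix q assume mq: "nim_move E p q"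
    obtain r where mr: "nim_move E q r" and Ir: "I r" using step[OF less(2) mq] by blast
    have "sum (fst r) E < sum (fst p) E"
      using move_decr[OF fin mq] move_decr[OF fin mr] by simp
    then have "nim_lose E r" using less(1) Ir by blast
    then show "nim_win E q" by (rule nim_win_nim_lose.win[OF mr])
  qed
qed

definition flip :: "bool list \<Rightarrow> nat \<Rightarrow> bool list" where
  "flip x i = x[i := \<not> x ! i]"

lemma length_flip[simp]: "length (flip x i) = length x"
  by (simp add: flip_def)

lemma nth_flip: "flip x i ! j = (if j = i \<and> i < length x then \<not> x ! i else x ! j)"
  by (cases "i < length x") (auto simp: flip_def nth_list_update list_update_beyond)

lemma flip_flip[simp]: "flip (flip x i) i = x"
  by (rule nth_equalityI) (auto simp: nth_flip)

lemma flip_comm: "flip (flip x i) j = flip (flip x j) i"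
  by (rule nth_equalityI) (auto simp: nth_flip)

lemma flip_neq: "i < length x \<Longrightarrow> flip x i \<noteq> x"
proof
  assume "i < length x" "flip x i = x"
  then have "flip x i ! i = x ! i" by simp
  with \<open>i < length x\<close> show False by (simp add: nth_flip)
qed

lemma flip_inj: "i < length x \<Longrightarrow> j < length x \<Longrightarrow> flip x i = flip x j \<longleftrightarrow> i = j"
proof
  assume "i < length x" "j < length x" "flip x i = flip x j"
  then have "flip x i ! i = flip x j ! i" by simp
  with \<open>i < length x\<close> show "i = j" by (auto simp: nth_flip split: if_splits)
qed simp

lemma edge_iff:
  "{a, b} \<in> hypercube_edges n \<longleftrightarrow> length a = n \<and> (\<exists>i<n. b = flip a i)"
proof
  assume "{a, b} \<in> hypercube_edges n"
  then obtain x y where ab: "{a, b} = {x, y}" and lx: "length x = n" and ly: "length y = n"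
    and c: "card {i. i < n \<and> x ! i \<noteq> y ! i} = 1"
    unfolding hypercube_edges_def hypercube_vertices_def by blast
  from c obtain i where S: "{i. i < n \<and> x ! i \<noteq> y ! i} = {i}" by (auto simp: card_Suc_eq)
  hence i: "i < n" by auto
  have y: "y = flip x i"
  proof (rule nth_equalityI)
    show "length y = length (flip x i)" using lx ly by simp
    fix k assume "k < length y"
    with S ly lx show "y ! k = flip x i ! k"
      by (cases "k = i") (auto simp: nth_flip)
  qed
  from ab have "(a = x \<and> b = y) \<or> (a = y \<and> b = x)" by (auto simp: doubleton_eq_iff)
  then show "length a = n \<and> (\<exists>i<n. b = flip a i)"
    using y i lx ly by auto
next
  assume "length a = n \<and> (\<exists>i<n. b = flip a i)"
  then obtain i where la: "length a = n" and i: "i < n" and b: "b = flip a i" by blast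
  have "{k. k < n \<and> a ! k \<noteq> b ! k} = {i}" using la i b by (auto simp: nth_flip)
  then have "\<exists>x y. {a, b} = {x, y} \<and> length x = n \<and> length y = n
      \<and> card {k. k < n \<and> x ! k \<noteq> y ! k} = 1"
    using la b by (intro exI[of _ a] exI[of _ b]) simp
  then show "{a, b} \<in> hypercube_edges n"
    unfolding hypercube_edges_def hypercube_vertices_def by simp
qed

lemma finite_edges: "finite (hypercube_edges n)"
proof -
  have "finite {xs :: bool list. set xs \<subseteq> UNIV \<and> length xs = n}"
    by (rule finite_lists_length_eq) simp
  hence f: "finite (hypercube_vertices n)" unfolding hypercube_vertices_def by simp
  have "hypercube_edges n \<subseteq> Pow (hypercube_vertices n)"
    unfolding hypercube_edges_def by auto
  then show ?thesis using f by (meson finite_Pow_iff finite_subset)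
qed

lemma move_E:
  assumes "nim_move (hypercube_edges n) (w, x) q"
  obtains i k where "i < n" "length x = n" "0 < k" "k \<le> w {x, flip x i}"
    "q = (w({x, flip x i} := w {x, flip x i} - k), flip x i)"
  using assms unfolding nim_move_def by (auto simp: edge_iff)

lemma move_I:
  assumes "length x = n" "i < n" "0 < w {x, flip x i}"
  shows "nim_move (hypercube_edges n) (w, x) (w({x, flip x i} := w {x, flip x i} - 1), flip x i)"
proof -
  have "{x, flip x i} \<in> hypercube_edges n" using assms by (auto simp: edge_iff)
  then show ?thesis unfolding nim_move_def using assms flip_neq[of i x]
    by (intro exI[of _ "flip x i"] exI[of _ "1::nat"]) auto
qed

fun par :: "bool list \<Rightarrow> bool" where
  "par [] = True"
| "par (a # xs) = (if a then \<not> par xs else par xs)"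

lemma par_update: "i < length x \<Longrightarrow> par (x[i := c]) = (if c = x ! i then par x else \<not> par x)"
proof (induction x arbitrary: i)
  case Nil then show ?case by simp
next
  case (Cons a xs) then show ?case by (cases i) auto
qed

lemma par_flip[simp]: "i < length x \<Longrightarrow> par (flip x i) = (\<not> par x)"
  by (simp add: flip_def par_update)

definition pr :: "nat \<Rightarrow> nat" where "pr i = (if even i then Suc i else i - 1)"

lemma pr_props:
  assumes "even n" "i < n"
  shows "pr i < n" "pr i \<noteq> i" "pr (pr i) = i"
  using assms unfolding pr_def
  by (auto elim!: evenE oddE)

definition Iev :: "nat \<Rightarrow> bool list \<Rightarrow> (bool list set \<Rightarrow> nat) \<times> bool list \<Rightarrow> bool" where
  "Iev n v p \<longleftrightarrow> length (snd p) = n \<and> par (snd p) = par v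
     \<and> (\<forall>e\<in>hypercube_edges n. fst p e \<le> 1)
     \<and> (\<forall>b i. length b = n \<longrightarrow> par b \<noteq> par v \<longrightarrow> i < n \<longrightarrow>
          fst p {b, flip b i} = fst p {b, flip b (pr i)})"

lemma step_even:
  assumes ev: "even n" and I: "Iev n v (w, x)" and mv: "nim_move (hypercube_edges n) (w, x) q"
  shows "\<exists>r. nim_move (hypercube_edges n) q r \<and> Iev n v r"
proof -
  obtain i k where i: "i < n" and lx: "length x = n" and k: "0 < k" "k \<le> w {x, flip x i}"
    and q: "q = (w({x, flip x i} := w {x, flip x i} - k), flip x i)"
    using mv by (rule move_E)
  define y where "y = flip x i"
  have ly: "length y = n" using lx by (simp add: y_def)
  have px: "par x = par v" using I by (simp add: Iev_def)
  have py: "par y \<noteq> par v" using px i lx by (simp add: y_def)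
  have le1: "\<forall>e\<in>hypercube_edges n. w e \<le> 1" using I by (simp add: Iev_def)
  have pair: "\<And>b j. length b = n \<Longrightarrow> par b \<noteq> par v \<Longrightarrow> j < n \<Longrightarrow> w {b, flip b j} = w {b, flip b (pr j)}"
    using I by (simp add: Iev_def)
  have exy: "{x, y} \<in> hypercube_edges n" using lx i by (auto simp: edge_iff y_def)
  have wxy: "w {x, y} = 1" using le1 exy k by (force simp: y_def)
  define w1 where "w1 = w({x, y} := 0)"
  have q': "q = (w1, y)" using q wxy k by (simp add: w1_def y_def)
  have fyi: "flip y i = x" by (simp add: y_def)
  have pi: "pr i < n" "pr i \<noteq> i" "pr (pr i) = i" using pr_props[OF ev i] by auto
  define z where "z = flip y (pr i)"
  have lz: "length z = n" using ly by (simp add: z_def)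
  have pz: "par z = par v" using py pi ly by (simp add: z_def)
  have zx: "z \<noteq> x" using flip_inj[of i y "pr i"] fyi pi i ly by (auto simp: z_def)
  have zy: "z \<noteq> y" using flip_neq[of "pr i" y] pi ly by (simp add: z_def)
  have "w {y, z} = w {y, x}" using pair[OF ly py i] fyi by (simp add: z_def)
  hence wyz: "w1 {y, z} = 1" using wxy zx zy by (auto simp: w1_def doubleton_eq_iff insert_commute)
  have mv2: "nim_move (hypercube_edges n) (w1, y) (w1({y, z} := w1 {y, z} - 1), z)"
    unfolding z_def by (rule move_I) (use ly pi wyz z_def in auto)
  define W where "W = w1({y, z} := 0)"
  have mv2': "nim_move (hypercube_edges n) q (W, z)" using mv2 wyz q' by (simp add: W_def)
  have e1: "\<And>b j. length b = n \<Longrightarrow> par b \<noteq> par v \<Longrightarrow> j < n \<Longrightarrow>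
      {b, flip b j} = {x, y} \<longleftrightarrow> b = y \<and> j = i"
  proof -
    fix b j assume lb: "length b = n" and pb: "par b \<noteq> par v" and j: "j < n"
    show "{b, flip b j} = {x, y} \<longleftrightarrow> b = y \<and> j = i"
    proof
      assume "{b, flip b j} = {x, y}"
      then have "b = y \<and> flip b j = x" using pb px by (auto simp: doubleton_eq_iff)
      then show "b = y \<and> j = i" using flip_inj[of j y i] fyi j i ly by auto
    qed (auto simp: fyi insert_commute)
  qed
  have e2: "\<And>b j. length b = n \<Longrightarrow> par b \<noteq> par v \<Longrightarrow> j < n \<Longrightarrow>
      {b, flip b j} = {y, z} \<longleftrightarrow> b = y \<and> j = pr i"
  proof -
    fix b j assume lb: "length b = n" and pb: "par b \<noteq> par v" and j: "j < n"
    show "{b, flip b j} = {y, z} \<longleftrightarrow> b = y \<and> j = pr i"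
    proof
      assume "{b, flip b j} = {y, z}"
      then have "b = y \<and> flip b j = z" using pb pz by (auto simp: doubleton_eq_iff)
      then show "b = y \<and> j = pr i" using flip_inj[of j y "pr i"] j pi ly by (auto simp: z_def)
    qed (auto simp: z_def)
  qed
  have "Iev n v (W, z)"
    unfolding Iev_def
  proof (intro conjI allI impI ballI)
    show "length (snd (W, z)) = n" using lz by simp
    show "par (snd (W, z)) = par v" using pz by simp
    fix e assume "e \<in> hypercube_edges n"
    then show "fst (W, z) e \<le> 1" using le1 by (simp add: W_def w1_def)
  next
    fix b j assume lb: "length b = n" and pb: "par b \<noteq> par v" and j: "j < n"
    have pj: "pr j < n" "pr (pr j) = j" using pr_props[OF ev j] by auto
    have Wv: "\<And>e. W e = (if e = {y, z} \<or> e = {x, y} then 0 else w e)"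
      by (simp add: W_def w1_def)
    show "fst (W, z) {b, flip b j} = fst (W, z) {b, flip b (pr j)}"
    proof (cases "b = y \<and> (j = i \<or> j = pr i)")
      case True
      then have "b = y \<and> (pr j = i \<or> pr j = pr i)" using pi by auto
      then show ?thesis using True Wv e1[OF lb pb j] e2[OF lb pb j] e1[OF lb pb pj(1)]
          e2[OF lb pb pj(1)] by auto
    next
      case False
      have h1: "pr j = i \<Longrightarrow> j = pr i" using pj(2) by auto
      have h2: "pr j = pr i \<Longrightarrow> j = i" by (metis pj(2) pi(3))
      have "\<not> (b = y \<and> (pr j = i \<or> pr j = pr i))" using False h1 h2 by blast
      then show ?thesis using False Wv e1[OF lb pb j] e2[OF lb pb j] e1[OF lb pb pj(1)]
          e2[OF lb pb pj(1)] pair[OF lb pb j] by auto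
    qed
  qed
  then show ?thesis using mv2' by blast
qed

lemma nth_flip1: "c < length v \<Longrightarrow> k < length v \<Longrightarrow> (flip v c ! k \<noteq> v ! k) \<longleftrightarrow> k = c"
  by (auto simp: nth_flip)

lemma nth_flip2: "c \<noteq> d \<Longrightarrow> c < length v \<Longrightarrow> d < length v \<Longrightarrow> k < length v \<Longrightarrow>
    (flip (flip v c) d ! k \<noteq> v ! k) \<longleftrightarrow> (k = c \<or> k = d)"
  by (auto simp: nth_flip)

lemma D2: "a \<noteq> b \<Longrightarrow> a < length v \<Longrightarrow> b < length v \<Longrightarrow> flip (flip v a) b \<noteq> v"
  by (metis nth_flip2)

lemma D3: "a \<noteq> b \<Longrightarrow> a < length v \<Longrightarrow> b < length v \<Longrightarrow> c < length v \<Longrightarrow> flip (flip v a) b \<noteq> flip v c"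
proof
  assume h: "a \<noteq> b" "a < length v" "b < length v" "c < length v" "flip (flip v a) b = flip v c"
  have "(flip (flip v a) b ! a \<noteq> v ! a)" "(flip (flip v a) b ! b \<noteq> v ! b)"
    using nth_flip2[of a b v] h by auto
  then have "a = c" "b = c" using h nth_flip1[of c v a] nth_flip1[of c v b] by auto
  then show False using h by simp
qed

lemma D4: "a \<noteq> b \<Longrightarrow> c \<noteq> d \<Longrightarrow> a < length v \<Longrightarrow> b < length v \<Longrightarrow> c < length v \<Longrightarrow> d < length v \<Longrightarrow>
   flip (flip v a) b = flip (flip v c) d \<Longrightarrow> (a = c \<and> b = d) \<or> (a = d \<and> b = c)"
proof -
  assume h: "a \<noteq> b" "c \<noteq> d" "a < length v" "b < length v" "c < length v" "d < length v"
    "flip (flip v a) b = flip (flip v c) d"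
  have "(flip (flip v a) b ! a \<noteq> v ! a)" "(flip (flip v a) b ! b \<noteq> v ! b)"
    using nth_flip2[of a b v] h by auto
  then have "a = c \<or> a = d" "b = c \<or> b = d" using h nth_flip2[of c d v a] nth_flip2[of c d v b] by auto
  then show ?thesis using h(1) by auto
qed

lemma mem_pair: "{p, q} = {r, s} \<Longrightarrow> p = r \<or> p = s"
  by (auto simp: doubleton_eq_iff)

definition Iod :: "nat \<Rightarrow> bool list \<Rightarrow> (bool list set \<Rightarrow> nat) \<times> bool list \<Rightarrow> bool" where
  "Iod n v p \<longleftrightarrow> (\<exists>j<n. snd p = flip v j)
     \<and> (\<forall>e\<in>hypercube_edges n. fst p e \<le> 1)
     \<and> (\<forall>a b. a < n \<longrightarrow> b < n \<longrightarrow> a \<noteq> b \<longrightarrow>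
          fst p {flip (flip v a) b, flip v a} = fst p {flip (flip v a) b, flip v b})
     \<and> even (card {a. a < n \<and> 0 < fst p {v, flip v a}})"


lemma step_odd:
  assumes lv: "length v = n" and I: "Iod n v (w, x)" and mv: "nim_move (hypercube_edges n) (w, x) q"
  shows "\<exists>r. nim_move (hypercube_edges n) q r \<and> Iod n v r"
proof -
  obtain i k where i: "i < n" and lx: "length x = n" and k: "0 < k" "k \<le> w {x, flip x i}"
    and q: "q = (w({x, flip x i} := w {x, flip x i} - k), flip x i)"
    using mv by (rule move_E)
  obtain j where j: "j < n" and xj: "x = flip v j" using I by (auto simp: Iod_def)
  have le1: "\<forall>e\<in>hypercube_edges n. w e \<le> 1" using I by (simp add: Iod_def)
  have pair: "\<And>a b. a < n \<Longrightarrow> b < n \<Longrightarrow> a \<noteq> b \<Longrightarrow>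
      w {flip (flip v a) b, flip v a} = w {flip (flip v a) b, flip v b}"
    using I unfolding Iod_def by (metis fst_conv)
  have cardC: "even (card {a. a < n \<and> 0 < w {v, flip v a}})" using I by (simp add: Iod_def)
  define u where "u = flip x i"
  have exu: "{x, u} \<in> hypercube_edges n" using lx i by (auto simp: edge_iff u_def)
  have wxu: "w {x, u} = 1" using le1 exu k by (force simp: u_def)
  define w1 where "w1 = w({x, u} := 0)"
  have q': "q = (w1, u)" using q wxu k by (simp add: w1_def u_def)
  show ?thesis
  proof (cases "i = j")
    case True
    then have uv: "u = v" by (simp add: u_def xj)
    define C where "C = {a. a < n \<and> 0 < w {v, flip v a}}"
    define C1 where "C1 = {a. a < n \<and> 0 < w1 {v, flip v a}}"
    have eqx: "\<And>a. a < n \<Longrightarrow> {v, flip v a} = {x, u} \<longleftrightarrow> a = j"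
    proof -
      fix a assume a: "a < n"
      show "{v, flip v a} = {x, u} \<longleftrightarrow> a = j"
      proof
        assume "{v, flip v a} = {x, u}"
        then have "flip v a = x" using uv flip_neq[of a v] a lv by (auto simp: doubleton_eq_iff)
        then show "a = j" using flip_inj[of a v j] a j lv xj by auto
      qed (auto simp: uv xj insert_commute)
    qed
    have C1C: "C1 = C - {j}"
      unfolding C1_def C_def w1_def using eqx by auto
    have jC: "j \<in> C" unfolding C_def using j wxu eqx[OF j] by simp
    have finC: "finite C" unfolding C_def by simp
    have "card C1 = card C - 1" using C1C jC finC by simp
    moreover have "card C \<ge> 1" using jC finC by (metis One_nat_def Suc_leI card_gt_0_iff empty_iff)
    moreover have "even (card C)" using cardC by (simp add: C_def)
    ultimately have "odd (card C1)" by (auto elim!: evenE)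
    then have "C1 \<noteq> {}" by (metis card.empty even_zero)
    then obtain a where aC1: "a \<in> C1" by blast
    have a: "a < n" and wa: "0 < w1 {v, flip v a}" using aC1 by (auto simp: C1_def)
    define z where "z = flip v a"
    have evz: "{v, z} \<in> hypercube_edges n" using lv a by (auto simp: edge_iff z_def)
    have "w1 {v, z} \<le> 1" using le1 evz by (simp add: w1_def)
    then have w1z: "w1 {v, z} = 1" using wa by (simp add: z_def)
    have mv2: "nim_move (hypercube_edges n) (w1, v) (w1({v, z} := w1 {v, z} - 1), z)"
      unfolding z_def by (rule move_I) (use lv a wa in auto)
    define W where "W = w1({v, z} := 0)"
    have mv2': "nim_move (hypercube_edges n) q (W, z)" using mv2 w1z q' uv by (simp add: W_def)
    have Wv: "\<And>e. W e = (if e = {v, z} \<or> e = {x, u} then 0 else w e)"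
      by (simp add: W_def w1_def)
    have "Iod n v (W, z)"
      unfolding Iod_def
    proof (intro conjI allI impI ballI)
      show "\<exists>j<n. snd (W, z) = flip v j" using a z_def by auto
      fix e assume "e \<in> hypercube_edges n"
      then show "fst (W, z) e \<le> 1" using le1 Wv by simp
    next
      fix a' b' assume h: "a' < n" "b' < n" "a' \<noteq> b'"
      let ?bb = "flip (flip v a') b'"
      have nb: "?bb \<noteq> v" "?bb \<noteq> x" "?bb \<noteq> z"
        using D2[of a' b' v] D3[of a' b' v j] D3[of a' b' v a] h lv a j xj z_def by auto
      have "{?bb, flip v a'} \<noteq> {v, z}" "{?bb, flip v a'} \<noteq> {x, u}"
        "{?bb, flip v b'} \<noteq> {v, z}" "{?bb, flip v b'} \<noteq> {x, u}"
        using nb uv by (metis mem_pair)+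
      then show "fst (W, z) {?bb, flip v a'} = fst (W, z) {?bb, flip v b'}"
        using Wv pair[OF h] by simp
    next
      have "{a. a < n \<and> 0 < fst (W, z) {v, flip v a}} = C1 - {a}"
      proof -
        have eqz: "\<And>a'. a' < n \<Longrightarrow> {v, flip v a'} = {v, z} \<longleftrightarrow> a' = a"
        proof -
          fix a' assume a': "a' < n"
          have "flip v a' \<noteq> v" using flip_neq[of a' v] a' lv by simp
          then show "{v, flip v a'} = {v, z} \<longleftrightarrow> a' = a"
            using flip_inj[of a' v a] a' a lv by (auto simp: doubleton_eq_iff z_def)
        qed
        show ?thesis unfolding C1_def W_def using eqz by auto
      qed
      moreover have "card (C1 - {a}) = card C1 - 1" using aC1 finC C1C by auto
      moreover have "card C1 \<ge> 1" using aC1 finC C1C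
        by (metis One_nat_def Suc_leI card_gt_0_iff empty_iff finite_Diff)
      ultimately show "even (card {a. a < n \<and> 0 < fst (W, z) {v, flip v a}})"
        using \<open>odd (card C1)\<close> by auto
    qed
    then show ?thesis using mv2' by blast
  next
    case False
    have uu: "u = flip (flip v j) i" by (simp add: u_def xj)
    define z where "z = flip v i"
    have zu: "z = flip u j" by (simp add: uu z_def flip_comm)
    have lu: "length u = n" using lx by (simp add: u_def)
    have "w {u, flip v j} = w {u, flip v i}" using pair[OF j i] False uu by (simp add: eq_commute)
    then have wuz: "w {u, z} = 1" using wxu xj by (simp add: z_def insert_commute)
    have zx: "z \<noteq> x" using flip_inj[of i v j] i j lv False xj z_def by auto
    have zu': "z \<noteq> u" using D3[of j i v i] False i j lv uu z_def by auto
    have w1z: "w1 {u, z} = 1" using wuz zx zu' by (auto simp: w1_def doubleton_eq_iff)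
    have mv2: "nim_move (hypercube_edges n) (w1, u) (w1({u, z} := w1 {u, z} - 1), z)"
      unfolding zu by (rule move_I) (use lu j w1z zu in auto)
    define W where "W = w1({u, z} := 0)"
    have mv2': "nim_move (hypercube_edges n) q (W, z)" using mv2 w1z q' by (simp add: W_def)
    have Wv: "\<And>e. W e = (if e = {u, z} \<or> e = {x, u} then 0 else w e)"
      by (simp add: W_def w1_def)
    have "Iod n v (W, z)"
      unfolding Iod_def
    proof (intro conjI allI impI ballI)
      show "\<exists>j<n. snd (W, z) = flip v j" using i z_def by auto
      fix e assume "e \<in> hypercube_edges n"
      then show "fst (W, z) e \<le> 1" using le1 Wv by simp
    next
      fix a' b' assume h: "a' < n" "b' < n" "a' \<noteq> b'"
      let ?bb = "flip (flip v a') b'"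
      have nb: "?bb \<noteq> x" "?bb \<noteq> z"
        using D3[of a' b' v j] D3[of a' b' v i] h lv i j xj z_def by auto
      show "fst (W, z) {?bb, flip v a'} = fst (W, z) {?bb, flip v b'}"
      proof (cases "?bb = u")
        case True
        then have "(a' = j \<and> b' = i) \<or> (a' = i \<and> b' = j)"
          using D4[of a' b' j i v] h i j False lv uu by auto
        then have "({?bb, flip v a'} = {x, u} \<or> {?bb, flip v a'} = {u, z})
            \<and> ({?bb, flip v b'} = {x, u} \<or> {?bb, flip v b'} = {u, z})"
          using True xj z_def by (auto simp: insert_commute)
        then show ?thesis using Wv by auto
      next
        case False
        have "{?bb, flip v a'} \<noteq> {u, z}" "{?bb, flip v a'} \<noteq> {x, u}"
          "{?bb, flip v b'} \<noteq> {u, z}" "{?bb, flip v b'} \<noteq> {x, u}"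
          using nb False by (metis mem_pair)+
        then show ?thesis using Wv pair[OF h] by simp
      qed
    next
      have nv: "v \<noteq> x" "v \<noteq> u" "v \<noteq> z"
        using flip_neq[of j v] D2[of j i v] flip_neq[of i v] False i j lv xj uu z_def by auto
      have "\<And>a. {v, flip v a} \<noteq> {u, z}" "\<And>a. {v, flip v a} \<noteq> {x, u}"
        using nv by (metis mem_pair)+
      then have "{a. a < n \<and> 0 < fst (W, z) {v, flip v a}} = {a. a < n \<and> 0 < w {v, flip v a}}"
        using Wv by simp
      then show "even (card {a. a < n \<and> 0 < fst (W, z) {v, flip v a}})" using cardC by simp
    qed
    then show ?thesis using mv2' by blast
  qed
qed


theorem mainTheorem5:
  fixes n :: nat and v :: "bool list"
  assumes "n \<ge> 1" and "v \<in> hypercube_vertices n"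
  shows "nim_P2_wins (hypercube_edges n) (unit_weights (hypercube_edges n)) v \<longleftrightarrow> even n"
proof -
  let ?E = "hypercube_edges n"
  let ?w = "unit_weights ?E"
  have lv: "length v = n" using assms(2) by (simp add: hypercube_vertices_def)
  have uw: "\<And>e. e \<in> ?E \<Longrightarrow> ?w e = 1" "\<And>e. ?w e \<le> 1"
    by (auto simp: unit_weights_def)
  show ?thesis
  proof (cases "even n")
    case True
    have I0: "Iev n v (?w, v)"
      unfolding Iev_def
    proof (intro conjI allI impI ballI)
      fix b :: "bool list" and i assume lb: "length b = n" and i: "i < n"
      have "pr i < n" using pr_props[OF True i] by simp
      then have "{b, flip b i} \<in> ?E" "{b, flip b (pr i)} \<in> ?E" using lb i by (auto simp: edge_iff)
      then show "fst (?w, v) {b, flip b i} = fst (?w, v) {b, flip b (pr i)}" using uw by simp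
    qed (use lv uw in auto)
    have "nim_lose ?E (?w, v)"
    proof (rule strat_lose[OF finite_edges, of "Iev n v", OF _ I0])
      fix p q assume "Iev n v p" "nim_move ?E p q"
      then show "\<exists>r. nim_move ?E q r \<and> Iev n v r"
        using step_even[OF True, of v "fst p" "snd p" q] by simp
    qed
    then show ?thesis using True by (simp add: nim_P2_wins_def)
  next
    case False
    have n0: "0 < n" using assms(1) by simp
    define x0 where "x0 = flip v 0"
    have e0: "{v, x0} \<in> ?E" using lv n0 by (auto simp: edge_iff x0_def)
    define w1 where "w1 = ?w({v, x0} := 0)"
    have mv: "nim_move ?E (?w, v) (w1, x0)"
      using move_I[of v n 0 ?w] lv n0 uw(1)[OF e0] by (simp add: w1_def x0_def)
    have w1v: "\<And>e. w1 e = (if e = {v, x0} then 0 else ?w e)" by (simp add: w1_def)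
    have I0: "Iod n v (w1, x0)"
      unfolding Iod_def
    proof (intro conjI allI impI ballI)
      show "\<exists>j<n. snd (w1, x0) = flip v j" using n0 x0_def by auto
      fix e assume "e \<in> ?E" then show "fst (w1, x0) e \<le> 1" using uw w1v by simp
    next
      fix a b assume h: "a < n" "b < n" "a \<noteq> b"
      let ?bb = "flip (flip v a) b"
      have nb: "?bb \<noteq> v" "?bb \<noteq> x0" using D2[of a b v] D3[of a b v 0] h lv n0 x0_def by auto
      have "flip ?bb b = flip v a" by simp
      moreover have "flip ?bb a = flip v b" by (metis flip_comm flip_flip)
      ultimately have "{?bb, flip v a} \<in> ?E" "{?bb, flip v b} \<in> ?E"
        using h lv by (auto simp: edge_iff)
      moreover have "{?bb, flip v a} \<noteq> {v, x0}" "{?bb, flip v b} \<noteq> {v, x0}"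
        using nb by (metis mem_pair)+
      ultimately show "fst (w1, x0) {?bb, flip v a} = fst (w1, x0) {?bb, flip v b}"
        using w1v uw by simp
    next
      have eq0: "\<And>a. a < n \<Longrightarrow> {v, flip v a} = {v, x0} \<longleftrightarrow> a = 0"
      proof -
        fix a' assume a': "a' < n"
        have "flip v a' \<noteq> v" using flip_neq[of a' v] a' lv by simp
        then show "{v, flip v a'} = {v, x0} \<longleftrightarrow> a' = 0"
          using flip_inj[of a' v 0] a' n0 lv by (auto simp: doubleton_eq_iff x0_def)
      qed
      have eE: "\<And>a. a < n \<Longrightarrow> {v, flip v a} \<in> ?E" using lv by (auto simp: edge_iff)
      have key: "\<And>a. a < n \<Longrightarrow> w1 {v, flip v a} = (if a = 0 then 0 else 1)"
      proof -
        fix a assume a: "a < n"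
        show "w1 {v, flip v a} = (if a = 0 then 0 else 1)"
        proof (cases "a = 0")
          case True then show ?thesis by (simp add: w1_def x0_def)
        next
          case False
          then have "{v, flip v a} \<noteq> {v, x0}" using eq0[OF a] by simp
          then show ?thesis using False uw(1)[OF eE[OF a]] by (simp add: w1_def)
        qed
      qed
      have "{a. a < n \<and> 0 < fst (w1, x0) {v, flip v a}} = {1..<n}"
        using key by (auto split: if_splits)
      then show "even (card {a. a < n \<and> 0 < fst (w1, x0) {v, flip v a}})"
        using False n0 by simp
    qed
    have "nim_lose ?E (w1, x0)"
    proof (rule strat_lose[OF finite_edges, of "Iod n v", OF _ I0])
      fix p q assume "Iod n v p" "nim_move ?E p q"
      then show "\<exists>r. nim_move ?E q r \<and> Iod n v r"
        using step_odd[OF lv, of "fst p" "snd p" q] by simp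
    qed
    then have "nim_win ?E (?w, v)" by (rule nim_win_nim_lose.win[OF mv])
    then have "\<not> nim_lose ?E (?w, v)" by (rule excl)
    then show ?thesis using False by (simp add: nim_P2_wins_def)
  qed
qed

end
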